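(* Let $E_1 := \{x\in\mathbb{R}^4 : x_1^2+x_2^2+x_3^2 \le x_4^2,\ x_4\ge0\}$, $E_2 := \{\lambda(-1,-1,0,-1) : \lambda\ge0\}$, $E_3 := \{\lambda(-1,1,0,-1):\lambda\ge0\}$ and $E := E_1\cup E_2\cup E_3$. Then $E$ is closed, $\lambda E\subseteq E$ for all $\lambda\ge0$, $E\cap(-E)=\{0\}$, and $\operatorname{conv}(E) = E_1+E_2+E_3$ is not closed; specifically $(0,0,1,0)$ lies in the closure of $\operatorname{conv}(E)$ but not in $\operatorname{conv}(E)$.
   Context: $\operatorname{conv}(E)$ denotes the convex hull of $E$. *)

theory Defs
  imports "HOL-Analysis.Analysis"
begin

definition E1 :: "(real^4) set" where
  "E1 = {x. (x$1)^2 + (x$2)^2 + (x$3)^2 \<le> (x$4)^2 \<and> x$4 \<ge> 0}"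

definition E2 :: "(real^4) set" where
  "E2 = {l *\<^sub>R (vector [-1, -1, 0, -1]) | l. l \<ge> 0}"

definition E3 :: "(real^4) set" where
  "E3 = {l *\<^sub>R (vector [-1, 1, 0, -1]) | l. l \<ge> 0}"

definition E :: "(real^4) set" where
  "E = E1 \<union> E2 \<union> E3"

end

theory Submission
  imports Defs
begin

lemma vec4 [simp]:
  "(vector [a,b,c,d] :: real^4) $ 1 = a"
  "(vector [a,b,c,d] :: real^4) $ 2 = b"
  "(vector [a,b,c,d] :: real^4) $ 3 = c"
  "(vector [a,b,c,d] :: real^4) $ 4 = d"
  unfolding vector_def by simp_all

lemma E2_alt: "E2 = {x::real^4. x$1 = x$4 \<and> x$2 = x$4 \<and> x$3 = 0 \<and> x$4 \<le> 0}"
proof (rule set_eqI, rule iffI)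
  fix x :: "real^4" assume "x \<in> E2" then show "x \<in> {x. x$1 = x$4 \<and> x$2 = x$4 \<and> x$3 = 0 \<and> x$4 \<le> 0}"
    by (auto simp: E2_def)
next
  fix x :: "real^4" assume h: "x \<in> {x. x$1 = x$4 \<and> x$2 = x$4 \<and> x$3 = 0 \<and> x$4 \<le> 0}"
  have "x = (- x$4) *\<^sub>R vector [-1, -1, 0, -1]"
    using h unfolding vec_eq_iff forall_4 by auto
  moreover have "- x$4 \<ge> 0" using h by auto
  ultimately show "x \<in> E2" unfolding E2_def by blast
qed

lemma E3_alt: "E3 = {x::real^4. x$1 = x$4 \<and> x$2 = - x$4 \<and> x$3 = 0 \<and> x$4 \<le> 0}"
proof (rule set_eqI, rule iffI)
  fix x :: "real^4" assume "x \<in> E3" then show "x \<in> {x. x$1 = x$4 \<and> x$2 = - x$4 \<and> x$3 = 0 \<and> x$4 \<le> 0}"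
    by (auto simp: E3_def)
next
  fix x :: "real^4" assume h: "x \<in> {x. x$1 = x$4 \<and> x$2 = - x$4 \<and> x$3 = 0 \<and> x$4 \<le> 0}"
  have "x = (- x$4) *\<^sub>R vector [-1, 1, 0, -1]"
    using h unfolding vec_eq_iff forall_4 by auto
  moreover have "- x$4 \<ge> 0" using h by auto
  ultimately show "x \<in> E3" unfolding E3_def by blast
qed

definition P3 :: "real^4 \<Rightarrow> real^3" where
  "P3 x = vector [x$1, x$2, x$3]"

lemma norm_P3: "norm (P3 x) = sqrt ((x$1)^2 + (x$2)^2 + (x$3)^2)"
  unfolding P3_def norm_vec_def L2_set_def sum_3 by (simp add: power2_eq_square)

lemma P3_lin: "P3 (u *\<^sub>R x + v *\<^sub>R y) = u *\<^sub>R P3 x + v *\<^sub>R P3 y"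
  unfolding P3_def vec_eq_iff forall_3 by simp

lemma E1_alt: "E1 = {x. norm (P3 x) \<le> x$4}"
proof -
  have "(s \<le> t^2 \<and> t \<ge> 0) \<longleftrightarrow> sqrt s \<le> t" if "s \<ge> 0" for s t :: real
  proof
    assume "s \<le> t^2 \<and> t \<ge> 0"
    then show "sqrt s \<le> t" by (meson real_sqrt_le_iff' order.refl real_le_lsqrt real_sqrt_le_mono) 
  next
    assume a: "sqrt s \<le> t"
    then have "t \<ge> 0" using real_sqrt_ge_zero[OF that] by linarith
    moreover have "(sqrt s)^2 \<le> t^2" using a that by (intro power_mono) auto
    ultimately show "s \<le> t^2 \<and> t \<ge> 0" using real_sqrt_pow2[OF that] by linarith
  qed
  then show ?thesis unfolding E1_def norm_P3
    by (auto simp del: real_sqrt_le_iff)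
qed

lemma convex_E1: "convex E1"
  unfolding convex_def E1_alt
proof (clarsimp)
  fix x y :: "real^4" and u v :: real
  assume a: "norm (P3 x) \<le> x$4" "norm (P3 y) \<le> y$4" "0 \<le> u" "0 \<le> v" "u + v = 1"
  have "norm (P3 (u *\<^sub>R x + v *\<^sub>R y)) \<le> u * norm (P3 x) + v * norm (P3 y)"
    unfolding P3_lin using a by (metis abs_of_nonneg norm_scaleR norm_triangle_ineq)
  also have "\<dots> \<le> u * x$4 + v * y$4" using a by (simp add: add_mono mult_left_mono)
  finally show "norm (P3 (u *\<^sub>R x + v *\<^sub>R y)) \<le> u * x $ 4 + v * y $ 4" .
qed

lemma convex_E2: "convex E2"
  unfolding convex_def E2_alt by (auto simp: mult_nonpos_nonneg add_nonpos_nonpos mult_nonneg_nonpos)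

lemma convex_E3: "convex E3"
  unfolding convex_def E3_alt by (auto simp: mult_nonneg_nonpos add_nonpos_nonpos algebra_simps)

lemma closed_E: "closed E"
proof -
  have "closed E1" unfolding E1_def
    by (intro closed_Collect_conj closed_Collect_le continuous_intros)
  moreover have "closed E2" unfolding E2_alt
    by (intro closed_Collect_conj closed_Collect_le closed_Collect_eq continuous_intros)
  moreover have "closed E3" unfolding E3_alt
    by (intro closed_Collect_conj closed_Collect_le closed_Collect_eq continuous_intros)
  ultimately show ?thesis unfolding E_def by auto
qed

lemma scale_E: "l \<ge> 0 \<Longrightarrow> x \<in> E \<Longrightarrow> l *\<^sub>R x \<in> E"
proof -
  assume l: "l \<ge> 0" and x: "x \<in> E"
  have P: "P3 (l *\<^sub>R x) = l *\<^sub>R P3 x" unfolding P3_def vec_eq_iff forall_3 by simp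
  from x have "x \<in> E1 \<union> E2 \<union> E3" unfolding E_def .
  then show ?thesis
  proof (elim UnE)
    assume "x \<in> E1" then show ?thesis unfolding E_def E1_alt using l
      by (auto simp: P mult_left_mono)
  next
    assume "x \<in> E2" then show ?thesis unfolding E_def E2_alt using l
      by (auto simp: mult_nonneg_nonpos)
  next
    assume "x \<in> E3" then show ?thesis unfolding E_def E3_alt using l
      by (auto simp: mult_nonneg_nonpos)
  qed
qed

lemma sq3: "a^2 + b^2 + c^2 \<le> (0::real) \<Longrightarrow> a = 0 \<and> b = 0 \<and> c = 0"
proof -
  assume h: "a^2 + b^2 + c^2 \<le> (0::real)"
  have "a^2 \<ge> 0" "b^2 \<ge> 0" "c^2 \<ge> 0" by simp_all
  then have "a^2 = 0" "b^2 = 0" "c^2 = 0" using h by linarith+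
  then show ?thesis by simp
qed

lemma neg_E: "x \<in> E \<Longrightarrow> - x \<in> E \<Longrightarrow> x = 0"
  unfolding E_def E1_def E2_alt E3_alt vec_eq_iff forall_4
  by (auto dest: sq3)

lemma zero_E: "(0::real^4) \<in> E" unfolding E_def E2_alt by simp

definition S :: "(real^4) set" where
  "S = {a + b + c | a b c. a \<in> E1 \<and> b \<in> E2 \<and> c \<in> E3}"

lemma convex_S: "convex S"
  unfolding convex_def S_def
proof (clarsimp)
  fix a b c a' b' c' :: "real^4" and u v :: real
  assume h: "a \<in> E1" "b \<in> E2" "c \<in> E3" "a' \<in> E1" "b' \<in> E2" "c' \<in> E3" "0 \<le> u" "0 \<le> v" "u + v = 1"
  have "u *\<^sub>R (a + b + c) + v *\<^sub>R (a' + b' + c') =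
     (u *\<^sub>R a + v *\<^sub>R a') + (u *\<^sub>R b + v *\<^sub>R b') + (u *\<^sub>R c + v *\<^sub>R c')"
    by (simp add: algebra_simps)
  moreover have "u *\<^sub>R a + v *\<^sub>R a' \<in> E1" using convexD[OF convex_E1] h by blast
  moreover have "u *\<^sub>R b + v *\<^sub>R b' \<in> E2" using convexD[OF convex_E2] h by blast
  moreover have "u *\<^sub>R c + v *\<^sub>R c' \<in> E3" using convexD[OF convex_E3] h by blast
  ultimately show "\<exists>a'' b'' c''. u *\<^sub>R (a + b + c) + v *\<^sub>R (a' + b' + c') = a'' + b'' + c''
     \<and> a'' \<in> E1 \<and> b'' \<in> E2 \<and> c'' \<in> E3" by blast
qed

lemma hull_eq: "convex hull E = S"
proof
  have z2: "0 \<in> E2" and z3: "0 \<in> E3" unfolding E2_alt E3_alt by simp_all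
  have "E \<subseteq> S" unfolding E_def S_def
  proof (auto)
    fix x assume "x \<in> E1" then show "\<exists>a b c. x = a + b + c \<and> a \<in> E1 \<and> b \<in> E2 \<and> c \<in> E3"
      using z2 z3 by (intro exI[of _ x] exI[of _ 0]) auto
  next
    fix x assume "x \<in> E2" then show "\<exists>a b c. x = a + b + c \<and> a \<in> E1 \<and> b \<in> E2 \<and> c \<in> E3"
      using z3 by (intro exI[of _ 0] exI[of _ x]) (auto simp: E1_def)
  next
    fix x assume "x \<in> E3" then show "\<exists>a b c. x = a + b + c \<and> a \<in> E1 \<and> b \<in> E2 \<and> c \<in> E3"
      using z2 by (intro exI[of _ 0] exI[of _ 0] exI[of _ x]) (auto simp: E1_def)
  qed
  then show "convex hull E \<subseteq> S" using convex_S by (rule hull_minimal)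
next
  show "S \<subseteq> convex hull E" unfolding S_def
  proof clarsimp
    fix a b c assume h: "a \<in> E1" "b \<in> E2" "c \<in> E3"
    have "(3::real) *\<^sub>R a \<in> convex hull E" "(3::real) *\<^sub>R b \<in> convex hull E" "(3::real) *\<^sub>R c \<in> convex hull E"
      using h scale_E[of 3] by (auto intro!: hull_inc simp: E_def)
    then have bc: "(1/2::real) *\<^sub>R (3 *\<^sub>R b) + (1/2::real) *\<^sub>R (3 *\<^sub>R c) \<in> convex hull E"
      by (intro convexD[OF convex_convex_hull]) auto
    have "(1/3::real) *\<^sub>R (3 *\<^sub>R a) + (2/3::real) *\<^sub>R ((1/2::real) *\<^sub>R (3 *\<^sub>R b) + (1/2::real) *\<^sub>R (3 *\<^sub>R c)) \<in> convex hull E"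
      by (rule convexD[OF convex_convex_hull \<open>(3::real) *\<^sub>R a \<in> convex hull E\<close> bc]) auto
    moreover have "(1/3::real) *\<^sub>R (3 *\<^sub>R a) + (2/3::real) *\<^sub>R ((1/2::real) *\<^sub>R (3 *\<^sub>R b) + (1/2::real) *\<^sub>R (3 *\<^sub>R c)) = a + b + c"
      by (simp add: algebra_simps)
    ultimately show "a + b + c \<in> convex hull E" by metis
  qed
qed

lemma not_in: "(vector [0, 0, 1, 0] :: real^4) \<notin> S"
proof
  assume "(vector [0, 0, 1, 0] :: real^4) \<in> S"
  then obtain a b c where h: "vector [0, 0, 1, 0] = a + b + c" "a \<in> E1" "b \<in> E2" "c \<in> E3"
    unfolding S_def by blast
  from h(1) have "a = vector [0, 0, 1, 0] - b - c" by (simp add: algebra_simps)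
  then have "a$1 = - b$1 - c$1" "a$2 = - b$2 - c$2" "a$3 = 1 - b$3 - c$3" "a$4 = - b$4 - c$4" by simp_all
  moreover have "b$1 = b$4" "b$3 = 0" using h(3) unfolding E2_alt by auto
  moreover have "c$1 = c$4" "c$3 = 0" using h(4) unfolding E3_alt by auto
  moreover have "(a$1)^2 + (a$2)^2 + (a$3)^2 \<le> (a$4)^2" using h(2) unfolding E1_def by auto
  ultimately have "(a$2)^2 + 1 \<le> 0" by simp
  moreover have "(a$2)^2 \<ge> 0" by simp
  ultimately show False by linarith
qed

lemma in_closure: "(vector [0, 0, 1, 0] :: real^4) \<in> closure S"
  unfolding closure_approachable
proof (intro allI impI)
  fix e :: real assume e: "e > 0"
  define d where "d = e/2"
  define l where "l = 1/(4*d)"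
  have d: "d > 0" "d < e" using e by (auto simp: d_def)
  have l: "l \<ge> 0" "4*l*d = 1" using d by (auto simp: l_def)
  define a :: "real^4" where "a = vector [2*l, 0, 1, 2*l+d]"
  define b :: "real^4" where "b = vector [-l, -l, 0, -l]"
  define c :: "real^4" where "c = vector [-l, l, 0, -l]"
  have "a \<in> E1" unfolding E1_def a_def using l d by (simp add: power2_eq_square algebra_simps)
  moreover have "b \<in> E2" unfolding E2_alt b_def using l by simp
  moreover have "c \<in> E3" unfolding E3_alt c_def using l by simp
  ultimately have inS: "a + b + c \<in> S" unfolding S_def by blast
  have "dist (a + b + c) (vector [0, 0, 1, 0]) \<le> (\<Sum>i\<in>UNIV. \<bar>(a + b + c - vector [0, 0, 1, 0]) $ i\<bar>)"
    unfolding dist_norm by (rule norm_le_l1_cart)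
  also have "\<dots> = d" unfolding sum_4 a_def b_def c_def using d by simp
  finally show "\<exists>y\<in>S. dist y (vector [0, 0, 1, 0]) < e" using inS d by force
qed

theorem mainTheorem11:
  shows "closed E
    \<and> (\<forall>l::real. l \<ge> 0 \<longrightarrow> (\<lambda>x. l *\<^sub>R x) ` E \<subseteq> E)
    \<and> E \<inter> uminus ` E = {0}
    \<and> convex hull E = {a + b + c | a b c. a \<in> E1 \<and> b \<in> E2 \<and> c \<in> E3}
    \<and> \<not> closed (convex hull E)
    \<and> (vector [0, 0, 1, 0] :: real^4) \<in> closure (convex hull E)
    \<and> (vector [0, 0, 1, 0] :: real^4) \<notin> convex hull E"
proof (intro conjI)
  show "closed E" by (rule closed_E)
  show "\<forall>l::real. l \<ge> 0 \<longrightarrow> (\<lambda>x. l *\<^sub>R x) ` E \<subseteq> E" using scale_E by blast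
  show "E \<inter> uminus ` E = {0}"
  proof
    show "E \<inter> uminus ` E \<subseteq> {0}" using neg_E by fastforce
    show "{0} \<subseteq> E \<inter> uminus ` E" using zero_E by (auto intro: image_eqI[of 0 _ 0])
  qed
  show "convex hull E = {a + b + c | a b c. a \<in> E1 \<and> b \<in> E2 \<and> c \<in> E3}"
    using hull_eq unfolding S_def .
  show "\<not> closed (convex hull E)" using hull_eq not_in in_closure closure_closed by metis
  show "(vector [0, 0, 1, 0] :: real^4) \<in> closure (convex hull E)" using hull_eq in_closure by simp
  show "(vector [0, 0, 1, 0] :: real^4) \<notin> convex hull E" using hull_eq not_in by simp
qed

end
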